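(* Let $\mathcal U$ be a critical update family, let $u\in\mathbb Q_1$ satisfy $\alpha(u)\le\alpha(\mathcal U)$, and let $Z$ be voracious with respect to $u$. Then $[\mathbb H_u\cup Z]\cap\ell_u$ is semi-periodic.
   Context: An update family is a finite collection $\mathcal U$ of finite subsets of $\mathbb Z^2\setminus\{0\}$, acting by $A_{t+1}=A_t\cup\{x:x+X\subset A_t\text{ for some }X\in\mathcal U\}$ with closure $[A]=\bigcup_tA_t$. $\mathbb Q_1$ is the set of $u\in S^1$ with rational or infinite slope. $\mathbb H_u=\{x\in\mathbb Z^2:\langle x,u\rangle<0\}$; $u$ stable if $[\mathbb H_u]=\mathbb H_u$, $\mathcal S$ the stable set. $\ell_u=\{x\in\mathbb Z^2:\langle x,u\rangle=0\}$, $\ell_u^+$ = origin plus sites of $\ell_u$ to the right of the origin looking in direction $u$, $\ell_u^-=(\ell_u\setminus\ell_u^+)\cup\{0\}$. $\alpha^\pm(u)$ = minimal $|Z|$ with $[\mathbb H_u\cup Z]\cap\ell_u^\pm$ infinite; $\alpha(u)=\min\{\alpha^+,\alpha^-\}$ if both finite, else $\infty$ (irrational $u$: $\infty$ if stable, $0$ otherwise). $\alpha(\mathcal U)=\min_C\sup_{u\in C}\alpha(u)$ over open semicircles; critical means some semicircle has finite intersection with $\mathcal S$ and every open semicircle meets $\mathcal S$. A set $Z\subset\mathbb Z^2$ with $|Z|\le\alpha(u)$ is voracious with respect to $u$ if $[\mathbb H_u\cup Z]\cap\ell_u$ is infinite. A set $Y\subset\ell_u$ is semi-periodic if $a+k\ell_u^+\subset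 Y$ or $a+k\ell_u^-\subset Y$ for some $a\in\ell_u$ and some integer $k\ge1$. *)

theory Defs
  imports Complex_Main "HOL-Library.Extended_Nat"
begin

type_synonym site = "int \<times> int"
type_synonym dir = "real \<times> real"

definition vadd :: "site \<Rightarrow> site \<Rightarrow> site" where
  "vadd x y = (fst x + fst y, snd x + snd y)"

definition vscale :: "int \<Rightarrow> site \<Rightarrow> site" where
  "vscale k x = (k * fst x, k * snd x)"

definition update_family :: "site set set \<Rightarrow> bool" where
  "update_family U \<longleftrightarrow> finite U \<and> (\<forall>X\<in>U. finite X \<and> (0,0) \<notin> X)"

definition step :: "site set set \<Rightarrow> site set \<Rightarrow> site set" where
  "step U A = A \<union> {x. \<exists>X\<in>U. vadd x ` X \<subseteq> A}"

definition closure_U :: "site set set \<Rightarrow> site set \<Rightarrow> site set" where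
  "closure_U U A = (\<Union>t::nat. (step U ^^ t) A)"

definition S1 :: "dir set" where
  "S1 = {u. (fst u)\<^sup>2 + (snd u)\<^sup>2 = 1}"

definition Q1 :: "dir set" where
  "Q1 = {u \<in> S1. fst u = 0 \<or> snd u / fst u \<in> \<rat>}"

definition ip :: "site \<Rightarrow> dir \<Rightarrow> real" where
  "ip x u = real_of_int (fst x) * fst u + real_of_int (snd x) * snd u"

definition halfplane :: "dir \<Rightarrow> site set" where
  "halfplane u = {x. ip x u < 0}"

definition stable :: "site set set \<Rightarrow> dir \<Rightarrow> bool" where
  "stable U u \<longleftrightarrow> closure_U U (halfplane u) = halfplane u"

definition stable_set :: "site set set \<Rightarrow> dir set" where
  "stable_set U = {u \<in> S1. stable U u}"

definition line :: "dir \<Rightarrow> site set" where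
  "line u = {x. ip x u = 0}"

text \<open>Looking in direction u, the right-hand direction is (snd u, - fst u).\<close>
definition line_plus :: "dir \<Rightarrow> site set" where
  "line_plus u = {x \<in> line u. ip x (snd u, - fst u) \<ge> 0}"

definition line_minus :: "dir \<Rightarrow> site set" where
  "line_minus u = (line u - line_plus u) \<union> {(0,0)}"

definition ecard :: "'a set \<Rightarrow> enat" where
  "ecard Z = (if finite Z then enat (card Z) else \<infinity>)"

definition alpha_plus :: "site set set \<Rightarrow> dir \<Rightarrow> enat" where
  "alpha_plus U u = Inf {ecard Z | Z.
      infinite (closure_U U (halfplane u \<union> Z) \<inter> line_plus u)}"

definition alpha_minus :: "site set set \<Rightarrow> dir \<Rightarrow> enat" where
  "alpha_minus U u = Inf {ecard Z | Z.
      infinite (closure_U U (halfplane u \<union> Z) \<inter> line_minus u)}"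

definition alpha :: "site set set \<Rightarrow> dir \<Rightarrow> enat" where
  "alpha U u =
     (if u \<in> Q1 then
        (if alpha_plus U u \<noteq> \<infinity> \<and> alpha_minus U u \<noteq> \<infinity>
         then min (alpha_plus U u) (alpha_minus U u) else \<infinity>)
      else (if stable U u then \<infinity> else 0))"

definition semicircle :: "dir \<Rightarrow> dir set" where
  "semicircle v = {w \<in> S1. fst w * fst v + snd w * snd v > 0}"

definition alpha_family :: "site set set \<Rightarrow> enat" where
  "alpha_family U = (INF v\<in>S1. SUP u\<in>semicircle v. alpha U u)"

definition critical :: "site set set \<Rightarrow> bool" where
  "critical U \<longleftrightarrow>
     (\<exists>v\<in>S1. finite (semicircle v \<inter> stable_set U)) \<and>
     (\<forall>v\<in>S1. semicircle v \<inter> stable_set U \<noteq> {})"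

definition voracious :: "site set set \<Rightarrow> dir \<Rightarrow> site set \<Rightarrow> bool" where
  "voracious U u Z \<longleftrightarrow> ecard Z \<le> alpha U u \<and>
     infinite (closure_U U (halfplane u \<union> Z) \<inter> line u)"

definition semi_periodic :: "dir \<Rightarrow> site set \<Rightarrow> bool" where
  "semi_periodic u Y \<longleftrightarrow> Y \<subseteq> line u \<and>
     (\<exists>a\<in>line u. \<exists>k::int. k \<ge> 1 \<and>
        ((vadd a \<circ> vscale k) ` line_plus u \<subseteq> Y \<or>
         (vadd a \<circ> vscale k) ` line_minus u \<subseteq> Y))"

end

theory Submission
  imports Defs
begin


definition closedU :: "site set set \<Rightarrow> site set \<Rightarrow> bool" where
  "closedU U C \<longleftrightarrow> (\<forall>x. \<forall>X\<in>U. vadd x ` X \<subseteq> C \<longrightarrow> x \<in> C)"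

lemma step_sup: "A \<subseteq> step U A" by (auto simp: step_def)

lemma step_mono: "A \<subseteq> B \<Longrightarrow> step U A \<subseteq> step U B" by (auto simp: step_def)

lemma iter_mono_t: "m \<le> n \<Longrightarrow> (step U ^^ m) A \<subseteq> (step U ^^ n) A"
proof (induction n)
  case 0 then show ?case by simp
next
  case (Suc n)
  show ?case
  proof (cases "m = Suc n")
    case True then show ?thesis by simp
  next
    case False
    then have "m \<le> n" using Suc.prems by simp
    then have "(step U ^^ m) A \<subseteq> (step U ^^ n) A" using Suc.IH by simp
    also have "\<dots> \<subseteq> (step U ^^ Suc n) A" using step_sup by simp
    finally show ?thesis .
  qed
qed

lemma cl_sub: "S \<subseteq> closure_U U S"
  unfolding closure_U_def by (metis UNIV_I UN_upper funpow_0)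

lemma cl_least: assumes "closedU U C" "S \<subseteq> C" shows "closure_U U S \<subseteq> C"
proof -
  have "(step U ^^ t) S \<subseteq> C" for t
  proof (induction t)
    case 0 then show ?case using assms by simp
  next
    case (Suc t)
    have "{x. \<exists>X\<in>U. vadd x ` X \<subseteq> (step U ^^ t) S} \<subseteq> C"
    proof
      fix x assume "x \<in> {x. \<exists>X\<in>U. vadd x ` X \<subseteq> (step U ^^ t) S}"
      then obtain X where "X \<in> U" "vadd x ` X \<subseteq> C" using Suc by blast
      then show "x \<in> C" using assms(1) unfolding closedU_def by blast
    qed
    moreover have "(step U ^^ Suc t) S = (step U ^^ t) S \<union> {x. \<exists>X\<in>U. vadd x ` X \<subseteq> (step U ^^ t) S}"
      by (simp add: step_def)
    ultimately show ?case using Suc by simp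
  qed
  then show ?thesis unfolding closure_U_def by blast
qed

lemma cl_closed: assumes "update_family U" shows "closedU U (closure_U U S)"
  unfolding closedU_def
proof (intro allI ballI impI)
  fix x X assume X: "X \<in> U" and sub: "vadd x ` X \<subseteq> closure_U U S"
  have fin: "finite (vadd x ` X)" using assms X unfolding update_family_def by auto
  have "\<exists>T. vadd x ` X \<subseteq> (step U ^^ T) S"
    using fin sub
  proof (induction rule: finite_induct)
    case empty then show ?case by auto
  next
    case (insert y F)
    then obtain T where T: "F \<subseteq> (step U ^^ T) S" by auto
    from insert obtain T' where T': "y \<in> (step U ^^ T') S" unfolding closure_U_def by auto
    have "F \<subseteq> (step U ^^ max T T') S" using T iter_mono_t[of T "max T T'"] by auto
    moreover have "y \<in> (step U ^^ max T T') S" using T' iter_mono_t[of T' "max T T'"] by auto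
    ultimately show ?case by blast
  qed
  then obtain T where "vadd x ` X \<subseteq> (step U ^^ T) S" by blast
  then have "x \<in> (step U ^^ Suc T) S" using X by (auto simp: step_def)
  then show "x \<in> closure_U U S" unfolding closure_U_def by blast
qed

lemma cl_mono: "S \<subseteq> T \<Longrightarrow> closure_U U S \<subseteq> closure_U U T"
proof -
  assume st: "S \<subseteq> T"
  have "(step U ^^ n) S \<subseteq> (step U ^^ n) T" for n
  proof (induction n)
    case 0 then show ?case using st by simp
  next
    case (Suc n) then show ?case using step_mono by simp
  qed
  then show ?thesis unfolding closure_U_def by blast
qed

lemma cl_in: assumes "update_family U" "S \<subseteq> closure_U U T" shows "closure_U U S \<subseteq> closure_U U T"
  using cl_least[OF cl_closed[OF assms(1)] assms(2)] .

lemma ip_vadd[simp]: "ip (vadd x y) u = ip x u + ip y u"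
  by (simp add: ip_def vadd_def algebra_simps)

lemma ip_vscale[simp]: "ip (vscale k x) u = of_int k * ip x u"
  by (simp add: ip_def vscale_def algebra_simps)

lemma vadd_assoc: "vadd (vadd a b) c = vadd a (vadd b c)" by (simp add: vadd_def)
lemma vadd_0[simp]: "vadd (0,0) x = x" by (simp add: vadd_def)

lemma vadd_image_comp: "vadd a ` vadd b ` S = vadd (vadd a b) ` S"
  by (simp add: image_image vadd_assoc)

lemma vadd_neg: "vadd (-fst v, -snd v) v = (0,0)" "vadd v (-fst v, -snd v) = (0,0)"
  by (simp_all add: vadd_def)

lemma vadd_image_0: "vadd (0,0) ` S = S" by simp

lemma closed_translate: assumes "closedU U C" shows "closedU U (vadd v ` C)"
  unfolding closedU_def
proof (intro allI ballI impI)
  fix x X assume X: "X \<in> U" and sub: "vadd x ` X \<subseteq> vadd v ` C"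
  have "vadd (vadd (-fst v, -snd v) x) ` X \<subseteq> C"
  proof
    fix z assume "z \<in> vadd (vadd (-fst v, -snd v) x) ` X"
    then obtain y where y: "y \<in> X" "z = vadd (vadd (-fst v, -snd v) x) y" by auto
    then have "vadd x y \<in> vadd v ` C" using sub by auto
    then obtain c where "c \<in> C" "vadd x y = vadd v c" by auto
    moreover have "z = c" using y \<open>vadd x y = vadd v c\<close> by (auto simp: vadd_def prod_eq_iff)
    ultimately show "z \<in> C" by simp
  qed
  then have "vadd (-fst v, -snd v) x \<in> C" using assms X unfolding closedU_def by blast
  moreover have "x = vadd v (vadd (-fst v, -snd v) x)" by (simp add: vadd_def)
  ultimately show "x \<in> vadd v ` C" by (metis rev_image_eqI)
qed

lemma cl_translate_sub: assumes "update_family U"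
  shows "closure_U U (vadd v ` S) \<subseteq> vadd v ` closure_U U S"
  by (rule cl_least[OF closed_translate[OF cl_closed[OF assms]]]) (use cl_sub in blast)

lemma cl_translate: assumes "update_family U"
  shows "closure_U U (vadd v ` S) = vadd v ` closure_U U S"
proof
  show "closure_U U (vadd v ` S) \<subseteq> vadd v ` closure_U U S" using cl_translate_sub[OF assms] .
  let ?w = "(-fst v, -snd v)"
  have e: "vadd ?w ` vadd v ` S = S" by (simp only: vadd_image_comp vadd_neg vadd_image_0)
  have "closure_U U S \<subseteq> vadd ?w ` closure_U U (vadd v ` S)"
    using cl_translate_sub[OF assms, of ?w "vadd v ` S"] e by simp
  then have "vadd v ` closure_U U S \<subseteq> vadd v ` vadd ?w ` closure_U U (vadd v ` S)" by blast
  also have "\<dots> = closure_U U (vadd v ` S)" by (simp only: vadd_image_comp vadd_neg vadd_image_0)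
  finally show "vadd v ` closure_U U S \<subseteq> closure_U U (vadd v ` S)" .
qed

lemma stable_iff: assumes "update_family U"
  shows "stable U u \<longleftrightarrow> (\<forall>X\<in>U. \<exists>y\<in>X. ip y u \<ge> 0)"
proof
  assume st: "stable U u"
  show "\<forall>X\<in>U. \<exists>y\<in>X. ip y u \<ge> 0"
  proof (rule ccontr)
    assume "\<not> ?thesis"
    then obtain X where X0: "X \<in> U" "\<not> (\<exists>y\<in>X. ip y u \<ge> 0)" by blast
    then have X: "X \<in> U" "\<forall>y\<in>X. ip y u < 0" by (auto simp: not_le)
    have "X \<subseteq> halfplane u" using X(2) by (auto simp: halfplane_def)
    then have "vadd (0,0) ` X \<subseteq> closure_U U (halfplane u)"
      using cl_sub[of "halfplane u" U] by simp
    then have "(0,0) \<in> closure_U U (halfplane u)" using cl_closed[OF assms] X unfolding closedU_def by blast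
    then have "(0,0) \<in> halfplane u" using st by (simp add: stable_def)
    then show False by (simp add: halfplane_def ip_def)
  qed
next
  assume h: "\<forall>X\<in>U. \<exists>y\<in>X. ip y u \<ge> 0"
  have "closedU U (halfplane u)" unfolding closedU_def halfplane_def
  proof (intro allI ballI impI)
    fix x X
    assume Xs: "X \<in> U" and sub: "vadd x ` X \<subseteq> {x. ip x u < 0}"
    obtain y where y: "y \<in> X" "ip y u \<ge> 0" using h Xs by blast
    have "vadd x y \<in> {x. ip x u < 0}" using sub y(1) by blast
    then have "ip x u + ip y u < 0" by simp
    then show "x \<in> {x. ip x u < 0}" using y(2) by simp
  qed
  then have "closure_U U (halfplane u) \<subseteq> halfplane u" by (rule cl_least) simp
  then show "stable U u" unfolding stable_def using cl_sub by blast
qed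

lemma unstable_line: assumes "update_family U" "\<not> stable U u"
  shows "line u \<subseteq> closure_U U (halfplane u \<union> Z)"
proof
  fix x assume x: "x \<in> line u"
  have "\<not> (\<forall>X\<in>U. \<exists>y\<in>X. ip y u \<ge> 0)" using assms stable_iff by blast
  then obtain X where X: "X \<in> U" "\<forall>y\<in>X. ip y u < 0" by (auto simp: not_le)
  have "vadd x ` X \<subseteq> halfplane u"
  proof
    fix z assume "z \<in> vadd x ` X"
    then obtain y where "y \<in> X" "z = vadd x y" by blast
    then show "z \<in> halfplane u" using X(2) x by (simp add: halfplane_def line_def)
  qed
  then have "vadd x ` X \<subseteq> closure_U U (halfplane u \<union> Z)"
    using cl_sub[of "halfplane u \<union> Z" U] by blast
  then show "x \<in> closure_U U (halfplane u \<union> Z)" using cl_closed[OF assms(1)] X unfolding closedU_def by blast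
qed




abbreviation pw :: "dir \<Rightarrow> dir" where "pw u \<equiv> (snd u, - fst u)"

lemma coords: assumes "u \<in> S1"
  shows "real_of_int (fst x) = fst u * ip x u + snd u * ip x (pw u)"
    and "real_of_int (snd x) = snd u * ip x u - fst u * ip x (pw u)"
proof -
  have h: "(fst u)^2 + (snd u)^2 = 1" using assms by (simp add: S1_def)
  have "fst u * ip x u + snd u * ip x (pw u) = real_of_int (fst x) * ((fst u)^2 + (snd u)^2)"
    by (simp add: ip_def algebra_simps power2_eq_square)
  then show "real_of_int (fst x) = fst u * ip x u + snd u * ip x (pw u)" using h by simp
  have "snd u * ip x u - fst u * ip x (pw u) = real_of_int (snd x) * ((fst u)^2 + (snd u)^2)"
    by (simp add: ip_def algebra_simps power2_eq_square)
  then show "real_of_int (snd x) = snd u * ip x u - fst u * ip x (pw u)" using h by simp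
qed

lemma S1_bounds: assumes "u \<in> S1" shows "\<bar>fst u\<bar> \<le> 1" "\<bar>snd u\<bar> \<le> 1"
proof -
  have h: "(fst u)^2 + (snd u)^2 = 1" using assms by (simp add: S1_def)
  then have "(fst u)^2 \<le> 1^2" "(snd u)^2 \<le> 1^2" using zero_le_power2[of "fst u"] zero_le_power2[of "snd u"] unfolding power_one by linarith+
  then show "\<bar>fst u\<bar> \<le> 1" "\<bar>snd u\<bar> \<le> 1" using abs_le_square_iff by (metis abs_one)+
qed

lemma box_finite: assumes "u \<in> S1"
  shows "finite {x. \<bar>ip x u\<bar> \<le> B1 \<and> \<bar>ip x (pw u)\<bar> \<le> B2}"
proof -
  let ?N = "ceiling (B1 + B2)"
  have "{x. \<bar>ip x u\<bar> \<le> B1 \<and> \<bar>ip x (pw u)\<bar> \<le> B2} \<subseteq> {-?N..?N} \<times> {-?N..?N}"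
  proof
    fix x assume x: "x \<in> {x. \<bar>ip x u\<bar> \<le> B1 \<and> \<bar>ip x (pw u)\<bar> \<le> B2}"
    have b: "\<bar>fst u\<bar> \<le> 1" "\<bar>snd u\<bar> \<le> 1" using S1_bounds assms by auto
    have m1: "\<bar>fst u * ip x u\<bar> \<le> B1" "\<bar>snd u * ip x u\<bar> \<le> B1"
      using x b by (simp_all add: abs_mult) (meson abs_ge_zero mult_left_le_one_le order_trans)+
    have m2: "\<bar>snd u * ip x (pw u)\<bar> \<le> B2" "\<bar>fst u * ip x (pw u)\<bar> \<le> B2"
      using x b by (simp_all add: abs_mult) (meson abs_ge_zero mult_left_le_one_le order_trans)+
    have "\<bar>real_of_int (fst x)\<bar> \<le> B1 + B2" using coords(1)[OF assms, of x] m1 m2 by linarith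
    moreover have "\<bar>real_of_int (snd x)\<bar> \<le> B1 + B2" using coords(2)[OF assms, of x] m1 m2 by linarith
    ultimately have "real_of_int \<bar>fst x\<bar> \<le> real_of_int ?N" "real_of_int \<bar>snd x\<bar> \<le> real_of_int ?N"
      using le_of_int_ceiling[of "B1+B2"] by simp_all linarith+
    then have "\<bar>fst x\<bar> \<le> ?N" "\<bar>snd x\<bar> \<le> ?N" by (simp_all only: of_int_le_iff)
    then show "x \<in> {-?N..?N} \<times> {-?N..?N}" by (auto simp: mem_Times_iff)
  qed
  then show ?thesis by (rule finite_subset) simp
qed

lemma line_p0: assumes "u \<in> S1" "x \<in> line u" "ip x (pw u) = 0" shows "x = (0,0)"
  using coords[OF assms(1), of x] assms(2,3) by (simp add: line_def prod_eq_iff)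

lemma line_nonzero: assumes "u \<in> Q1" shows "\<exists>e. e \<noteq> (0,0) \<and> e \<in> line u"
proof (cases "fst u = 0")
  case True then show ?thesis by (intro exI[of _ "(1,0)"]) (simp add: line_def ip_def)
next
  case False
  then obtain r where r: "snd u / fst u = of_rat r" using assms by (auto simp: Q1_def Rats_def)
  obtain a b where ab: "r = Fract a b" "b > 0" by (cases r) auto
  have "snd u / fst u = of_int a / of_int b" using r ab by (simp add: of_rat_rat)
  then have "snd u * of_int b = fst u * of_int a" using False ab by (simp add: field_simps)
  then show ?thesis
    by (intro exI[of _ "(a, -b)"]) (use ab in \<open>auto simp: line_def ip_def algebra_simps\<close>)
qed

lemma line_vadd: "x \<in> line u \<Longrightarrow> y \<in> line u \<Longrightarrow> vadd x y \<in> line u" by (simp add: line_def)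
lemma line_vscale: "x \<in> line u \<Longrightarrow> vscale k x \<in> line u" by (simp add: line_def)

lemma line_dir: assumes "u \<in> Q1"
  shows "\<exists>e. e \<in> line u \<and> ip e (pw u) > 0"
proof -
  obtain e where e: "e \<noteq> (0,0)" "e \<in> line u" using line_nonzero[OF assms] by blast
  have S: "u \<in> S1" using assms by (simp add: Q1_def)
  have ne: "ip e (pw u) \<noteq> 0" using line_p0[OF S e(2)] e(1) by blast
  show ?thesis
  proof (cases "ip e (pw u) > 0")
    case True then show ?thesis using e by blast
  next
    case False
    then have "ip (vscale (-1) e) (pw u) > 0" using ne by simp
    then show ?thesis using line_vscale[OF e(2)] by blast
  qed
qed

lemma inf_halfline: assumes "e \<in> line u" "c * ip e (pw u) > 0"
  shows "infinite {x \<in> line u. c * ip x (pw u) \<ge> 0}"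
proof
  assume fin: "finite {x \<in> line u. c * ip x (pw u) \<ge> 0}"
  have "range (\<lambda>n::nat. vscale (int n) e) \<subseteq> {x \<in> line u. c * ip x (pw u) \<ge> 0}"
  proof
    fix y assume "y \<in> range (\<lambda>n::nat. vscale (int n) e)"
    then obtain n where n: "y = vscale (int n) e" by auto
    have eq: "c * ip y (pw u) = real n * (c * ip e (pw u))" using n by (simp add: algebra_simps)
    have "c * ip y (pw u) \<ge> 0" unfolding eq using assms(2) by simp
    moreover have "y \<in> line u" using n line_vscale[OF assms(1)] by simp
    ultimately show "y \<in> {x \<in> line u. c * ip x (pw u) \<ge> 0}" using assms(2) by simp
  qed
  moreover have "inj (\<lambda>n::nat. vscale (int n) e)"
  proof (rule injI)
    fix m n :: nat assume "vscale (int m) e = vscale (int n) e"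
    then have "ip (vscale (int m) e) (pw u) = ip (vscale (int n) e) (pw u)" by simp
    then have "real m * ip e (pw u) = real n * ip e (pw u)" by simp
    moreover have "ip e (pw u) \<noteq> 0" using assms(2) by auto
    ultimately show "m = n" by simp
  qed
  ultimately show False using fin by (meson finite_imageD finite_subset infinite_UNIV_nat)
qed

lemma line_plus_eq: "line_plus u = {x \<in> line u. 1 * ip x (pw u) \<ge> 0}"
  by (simp add: line_plus_def)

lemma line_minus_eq: assumes "u \<in> S1" shows "line_minus u = {x \<in> line u. (-1) * ip x (pw u) \<ge> 0}"
  using line_p0[OF assms] by (auto simp: line_minus_def line_plus_def line_def ip_def)

lemma inf_line_plus: assumes "u \<in> Q1" shows "infinite (line_plus u)"
proof -
  obtain e where "e \<in> line u" "ip e (pw u) > 0" using line_dir[OF assms] by blast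
  then show ?thesis unfolding line_plus_eq using inf_halfline[of e u 1] by simp
qed

lemma inf_line_minus: assumes "u \<in> Q1" shows "infinite (line_minus u)"
proof -
  have S: "u \<in> S1" using assms by (simp add: Q1_def)
  obtain e where "e \<in> line u" "ip e (pw u) > 0" using line_dir[OF assms] by blast
  then show ?thesis unfolding line_minus_eq[OF S] using inf_halfline[of "vscale (-1) e" u "-1"] line_vscale by simp
qed

lemma line_multiple: assumes "u \<in> S1" "e \<in> line u" "x \<in> line u" "e \<noteq> (0,0)"
  shows "vscale (if fst e \<noteq> 0 then fst e else snd e) x = vscale (if fst e \<noteq> 0 then fst x else snd x) e"
proof -
  have h1: "real_of_int (fst e) * fst u + real_of_int (snd e) * snd u = 0" using assms(2) by (simp add: line_def ip_def)
  have h2: "real_of_int (fst x) * fst u + real_of_int (snd x) * snd u = 0" using assms(3) by (simp add: line_def ip_def)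
  have h1': "real_of_int (fst e) * fst u = - (real_of_int (snd e) * snd u)" using h1 by linarith
  have h2': "real_of_int (fst x) * fst u = - (real_of_int (snd x) * snd u)" using h2 by linarith
  have h1'': "real_of_int (snd e) * snd u = - (real_of_int (fst e) * fst u)" using h1 by linarith
  have h2'': "real_of_int (snd x) * snd u = - (real_of_int (fst x) * fst u)" using h2 by linarith
  have d1: "(real_of_int (fst e * snd x - snd e * fst x)) * fst u = 0"
  proof -
    have "(real_of_int (fst e * snd x - snd e * fst x)) * fst u
        = real_of_int (snd x) * (real_of_int (fst e) * fst u) - real_of_int (snd e) * (real_of_int (fst x) * fst u)"
      by (simp add: algebra_simps)
    also have "\<dots> = real_of_int (snd x) * (- (real_of_int (snd e) * snd u)) - real_of_int (snd e) * (- (real_of_int (snd x) * snd u))"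
      by (simp only: h1' h2')
    finally show ?thesis by (simp add: algebra_simps)
  qed
  have d2: "(real_of_int (fst e * snd x - snd e * fst x)) * snd u = 0"
  proof -
    have "(real_of_int (fst e * snd x - snd e * fst x)) * snd u
        = real_of_int (fst e) * (real_of_int (snd x) * snd u) - real_of_int (snd e) * snd u * real_of_int (fst x)"
      by (simp add: algebra_simps)
    also have "\<dots> = real_of_int (fst e) * (- (real_of_int (fst x) * fst u)) - (- (real_of_int (fst e) * fst u)) * real_of_int (fst x)"
      by (simp only: h1'' h2'')
    finally show ?thesis by (simp add: algebra_simps)
  qed
  have "u \<noteq> (0,0)" using assms(1) by (auto simp: S1_def)
  then have "fst u \<noteq> 0 \<or> snd u \<noteq> 0" by (auto simp: prod_eq_iff)
  then have "real_of_int (fst e * snd x - snd e * fst x) = 0" using d1 d2 by (metis mult_eq_0_iff)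
  then have det: "fst e * snd x = snd e * fst x" by (simp only: of_int_eq_0_iff)
  show ?thesis using det assms(4) by (auto simp: vscale_def prod_eq_iff algebra_simps)
qed




definition rt :: "dir \<Rightarrow> real \<Rightarrow> dir" where
  "rt u t = ((fst u - t * snd u) / sqrt (1 + t^2), (snd u + t * fst u) / sqrt (1 + t^2))"

abbreviation nv :: "dir \<Rightarrow> dir" where "nv u \<equiv> (- snd u, fst u)"

lemma sq_pos: "sqrt (1 + t^2) > 0" by (simp add: add_pos_nonneg)

lemma rt_S1: assumes "u \<in> S1" shows "rt u t \<in> S1"
proof -
  have h: "(fst u)^2 + (snd u)^2 = 1" using assms by (simp add: S1_def)
  have s: "(sqrt (1 + t^2))^2 = 1 + t^2" by (simp add: add_nonneg_nonneg)
  have "(fst u - t * snd u)^2 + (snd u + t * fst u)^2 = (1 + t^2) * ((fst u)^2 + (snd u)^2)"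
    by (simp add: power2_eq_square algebra_simps)
  then have "(fst u - t * snd u)^2 + (snd u + t * fst u)^2 = (sqrt (1 + t^2))^2" using h s by simp
  then show ?thesis using sq_pos[of t] by (simp add: S1_def rt_def power_divide add_divide_distrib[symmetric])
qed

lemma ip_rt: "ip y (rt u t) = (ip y u + t * ip y (nv u)) / sqrt (1 + t^2)"
  using sq_pos[of t] by (simp add: ip_def rt_def field_simps)

lemma sc_rt: "fst (rt u t) * fst v + snd (rt u t) * snd v
   = ((fst u * fst v + snd u * snd v) + t * (- snd u * fst v + fst u * snd v)) / sqrt (1 + t^2)"
  using sq_pos[of t] by (simp add: rt_def field_simps)

lemma rt_inj: assumes "u \<in> S1" shows "inj (rt u)"
proof (rule injI)
  fix t s assume eq: "rt u t = rt u s"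
  have h: "(fst u)^2 + (snd u)^2 = 1" using assms by (simp add: S1_def)
  have k: "fst (rt u r) * (- snd u) + snd (rt u r) * fst u = r / sqrt (1 + r^2)" for r
  proof -
    have "fst (rt u r) * (- snd u) + snd (rt u r) * fst u = r * ((fst u)^2 + (snd u)^2) / sqrt (1 + r^2)"
      using sq_pos[of r] by (simp add: rt_def field_simps power2_eq_square)
    then show ?thesis using h by simp
  qed
  have e: "t / sqrt (1 + t^2) = s / sqrt (1 + s^2)" using k[of t] k[of s] eq by simp
  have a: "sqrt (1 + t^2) > 0" "sqrt (1 + s^2) > 0" using sq_pos by auto
  have e2: "t * sqrt (1 + s^2) = s * sqrt (1 + t^2)" using e a by (simp add: field_simps)
  then have "(t * sqrt (1 + s^2))^2 = (s * sqrt (1 + t^2))^2" by simp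
  then have "t^2 * (1 + s^2) = s^2 * (1 + t^2)" by (simp add: power_mult_distrib add_nonneg_nonneg)
  then have "t^2 = s^2" by (simp add: algebra_simps)
  then have "t = s \<or> t = - s" by (simp add: power2_eq_iff)
  moreover have "t = - s \<Longrightarrow> t = s"
  proof -
    assume ts: "t = - s"
    then have "- s * sqrt (1 + s^2) = s * sqrt (1 + s^2)" using e2 by simp
    then have "s = 0" using a by simp
    then show "t = s" using ts by simp
  qed
  ultimately show "t = s" by blast
qed

lemma small_tau: assumes "finite S" "\<forall>(a,b)\<in>S. a > (0::real)"
  shows "\<exists>\<tau>>0. \<forall>t. \<bar>t\<bar> < \<tau> \<longrightarrow> (\<forall>(a,b)\<in>S. a + t * b > 0)"
  using assms
proof (induction rule: finite_induct)
  case empty then show ?case by (intro exI[of _ 1]) auto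
next
  case (insert p S)
  obtain a b where p: "p = (a,b)" by (cases p)
  have a: "a > 0" using insert.prems p by auto
  obtain \<tau> where \<tau>: "\<tau> > 0" "\<forall>t. \<bar>t\<bar> < \<tau> \<longrightarrow> (\<forall>(a,b)\<in>S. a + t * b > 0)" using insert by auto
  define \<tau>' where "\<tau>' = min \<tau> (a / (\<bar>b\<bar> + 1))"
  have pos: "\<tau>' > 0" using \<tau> a by (simp add: \<tau>'_def)
  have "a + t * b > 0" if "\<bar>t\<bar> < \<tau>'" for t
  proof -
    have "\<bar>t\<bar> < a / (\<bar>b\<bar> + 1)" using that by (simp add: \<tau>'_def)
    then have "\<bar>t\<bar> * (\<bar>b\<bar> + 1) < a" by (simp add: pos_less_divide_eq add_pos_nonneg)
    then have "\<bar>t * b\<bar> < a" by (simp add: abs_mult algebra_simps)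
    then show ?thesis by linarith
  qed
  then show ?case using \<tau> pos p by (intro exI[of _ \<tau>']) (auto simp: \<tau>'_def)
qed

lemma irr_ip: assumes "u \<in> S1" "u \<notin> Q1" "y \<noteq> (0,0)" shows "ip y u \<noteq> 0"
proof
  assume h: "ip y u = 0"
  have f: "fst u \<noteq> 0" and r: "snd u / fst u \<notin> \<rat>" using assms by (auto simp: Q1_def)
  have h': "real_of_int (fst y) * fst u + real_of_int (snd y) * snd u = 0" using h by (simp add: ip_def)
  show False
  proof (cases "snd y = 0")
    case True
    then have "fst y = 0" using h' f by simp
    then show False using True assms(3) by (simp add: prod_eq_iff)
  next
    case False
    then have "snd u / fst u = - of_int (fst y) / of_int (snd y)" using h' f
      by (simp add: field_simps)
    moreover have "- of_int (fst y) / of_int (snd y) \<in> (\<rat>::real set)" by simp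
    ultimately show False using r by simp
  qed
qed




lemma tau_for: assumes uf: "update_family U" and u: "u \<in> semicircle v0"
  shows "\<exists>\<tau>>0. \<forall>t. \<bar>t\<bar> < \<tau> \<longrightarrow> rt u t \<in> semicircle v0 \<and>
     (\<forall>y\<in>\<Union>U. ip y u > 0 \<longrightarrow> ip y (rt u t) > 0)"
proof -
  let ?S = "(\<lambda>y. (ip y u, ip y (nv u))) ` {y\<in>\<Union>U. ip y u > 0} \<union>
            {(fst u * fst v0 + snd u * snd v0, - snd u * fst v0 + fst u * snd v0)}"
  have finU: "finite (\<Union>U)" using uf by (auto simp: update_family_def)
  have "finite {y\<in>\<Union>U. ip y u > 0}" using finU by (rule finite_subset[rotated]) blast
  then have "finite ?S" by simp
  moreover have "\<forall>(a,b)\<in>?S. a > 0" using u by (auto simp: semicircle_def)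
  ultimately obtain \<tau> where \<tau>: "\<tau> > 0" "\<forall>t. \<bar>t\<bar> < \<tau> \<longrightarrow> (\<forall>(a,b)\<in>?S. a + t * b > 0)"
    using small_tau by blast
  have uS: "u \<in> S1" using u by (simp add: semicircle_def)
  show ?thesis
  proof (intro exI[of _ \<tau>] conjI allI impI ballI)
    show "\<tau> > 0" by fact
  next
    fix t assume t: "\<bar>t\<bar> < \<tau>"
    have "fst u * fst v0 + snd u * snd v0 + t * (- snd u * fst v0 + fst u * snd v0) > 0"
      using \<tau>(2) t by auto
    then show "rt u t \<in> semicircle v0"
      using rt_S1[OF uS] sc_rt[of u t v0] sq_pos[of t] by (simp add: semicircle_def)
  next
    fix t y assume t: "\<bar>t\<bar> < \<tau>" and y: "y \<in> \<Union>U" and p: "ip y u > 0"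
    have "ip y u + t * ip y (nv u) > 0" using \<tau>(2) t y p by blast
    then show "ip y (rt u t) > 0" using ip_rt[of y u t] sq_pos[of t] by simp
  qed
qed

lemma F_def_stable: "w \<in> semicircle v0 \<Longrightarrow> w \<notin> semicircle v0 \<inter> stable_set U \<Longrightarrow> \<not> stable U w"
  by (auto simp: stable_set_def semicircle_def)

lemma irr_case: assumes uf: "update_family U" and u: "u \<in> semicircle v0" and nq: "u \<notin> Q1"
  and st: "stable U u" and fin: "finite (semicircle v0 \<inter> stable_set U)"
  shows False
proof -
  have uS: "u \<in> S1" using u by (simp add: semicircle_def)
  obtain \<tau> where \<tau>: "\<tau> > 0" "\<forall>t. \<bar>t\<bar> < \<tau> \<longrightarrow> rt u t \<in> semicircle v0 \<and>
     (\<forall>y\<in>\<Union>U. ip y u > 0 \<longrightarrow> ip y (rt u t) > 0)" using tau_for[OF uf u] by blast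
  have "rt u ` {0<..<\<tau>} \<subseteq> semicircle v0 \<inter> stable_set U"
  proof
    fix w assume "w \<in> rt u ` {0<..<\<tau>}"
    then obtain t where t: "0 < t" "t < \<tau>" "w = rt u t" by auto
    have at: "\<bar>t\<bar> < \<tau>" using t by simp
    have "\<forall>X\<in>U. \<exists>y\<in>X. ip y (rt u t) \<ge> 0"
    proof
      fix X assume X: "X \<in> U"
      obtain y where y: "y \<in> X" "ip y u \<ge> 0" using st stable_iff[OF uf] X by blast
      have "y \<noteq> (0,0)" using uf X y by (auto simp: update_family_def)
      then have "ip y u \<noteq> 0" using irr_ip[OF uS nq] by blast
      then have "ip y u > 0" using y(2) by linarith
      then have "ip y (rt u t) > 0" using \<tau>(2) at X y by blast
      then show "\<exists>y\<in>X. ip y (rt u t) \<ge> 0" using y(1) by (intro bexI[of _ y]) auto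
    qed
    then have "stable U (rt u t)" using stable_iff[OF uf] by blast
    moreover have "rt u t \<in> semicircle v0" using \<tau>(2) at by blast
    ultimately show "w \<in> semicircle v0 \<inter> stable_set U"
      using t(3) rt_S1[OF uS, of t] by (simp add: stable_set_def)
  qed
  moreover have "infinite (rt u ` {0<..<\<tau>})"
  proof
    assume "finite (rt u ` {0<..<\<tau>})"
    moreover have "inj_on (rt u) {0<..<\<tau>}" using rt_inj[OF uS] by (simp add: inj_on_def inj_def)
    ultimately have "finite {0<..<\<tau>}" by (rule finite_imageD)
    then show False using infinite_Ioo[OF \<tau>(1)] by blast
  qed
  ultimately show False using fin finite_subset by blast
qed

lemma rat_case: assumes uf: "update_family U" and u: "u \<in> semicircle v0"
  and st: "stable U u" and fin: "finite (semicircle v0 \<inter> stable_set U)"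
  and s: "s = 1 \<or> s = (-1::real)"
  shows "\<exists>X\<in>U. \<forall>y\<in>X. ip y u < 0 \<or> (ip y u = 0 \<and> s * ip y (pw u) > 0)"
proof -
  have uS: "u \<in> S1" using u by (simp add: semicircle_def)
  obtain \<tau> where \<tau>: "\<tau> > 0" "\<forall>t. \<bar>t\<bar> < \<tau> \<longrightarrow> rt u t \<in> semicircle v0 \<and>
     (\<forall>y\<in>\<Union>U. ip y u > 0 \<longrightarrow> ip y (rt u t) > 0)" using tau_for[OF uf u] by blast
  let ?T = "{t. 0 < s * t \<and> \<bar>t\<bar> < \<tau>}"
  have "infinite ?T"
  proof (cases "s = 1")
    case True
    then have "?T = {0<..<\<tau>}" by auto
    then show ?thesis using infinite_Ioo[of 0 \<tau>] infinite_Ioo[of "-\<tau>" 0] \<tau>(1) by simp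
  next
    case False
    then have "s = -1" using s by simp
    then have "?T = {-\<tau><..<0}" by auto
    then show ?thesis using infinite_Ioo[of 0 \<tau>] infinite_Ioo[of "-\<tau>" 0] \<tau>(1) by simp
  qed
  moreover have "inj_on (rt u) ?T" using rt_inj[OF uS] by (simp add: inj_on_def inj_def)
  ultimately have "infinite (rt u ` ?T)" using finite_imageD by blast
  then obtain w where w: "w \<in> rt u ` ?T" "w \<notin> semicircle v0 \<inter> stable_set U"
    using fin by (meson finite_subset subsetI)
  then obtain t where t: "0 < s * t" "\<bar>t\<bar> < \<tau>" "w = rt u t" by auto
  have "w \<in> semicircle v0" using \<tau>(2) t by simp
  then have "\<not> stable U w" using w(2) by (rule F_def_stable)
  then have "\<not> (\<forall>X\<in>U. \<exists>y\<in>X. ip y w \<ge> 0)" using stable_iff[OF uf] by blast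
  then obtain X where X: "X \<in> U" "\<forall>y\<in>X. ip y w < 0" by (auto simp: not_le)
  have "\<forall>y\<in>X. ip y u < 0 \<or> (ip y u = 0 \<and> s * ip y (pw u) > 0)"
  proof
    fix y assume y: "y \<in> X"
    have sp: "sqrt (1 + t^2) > 0" by (rule sq_pos)
    have lt: "ip y (rt u t) < 0" using X(2) y t(3) by blast
    have "ip y u + t * ip y (nv u) = ip y (rt u t) * sqrt (1 + t^2)"
      using ip_rt[of y u t] sp by simp
    also have "\<dots> < 0" using lt sp by (rule mult_neg_pos)
    finally have neg: "ip y u + t * ip y (nv u) < 0" .
    have "\<not> ip y u > 0"
    proof
      assume "ip y u > 0"
      then have "ip y w > 0" using \<tau>(2) t X y by blast
      then show False using X(2) y by force
    qed
    moreover have "ip y u = 0 \<Longrightarrow> s * ip y (pw u) > 0"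
    proof -
      assume z: "ip y u = 0"
      have "ip y (nv u) = - ip y (pw u)" by (simp add: ip_def)
      then have "t * ip y (pw u) > 0" using neg z by simp
      then show "s * ip y (pw u) > 0" using t(1) s by (auto simp: zero_less_mult_iff)
    qed
    ultimately show "ip y u < 0 \<or> (ip y u = 0 \<and> s * ip y (pw u) > 0)" by force
  qed
  then show ?thesis using X(1) by blast
qed


lemma propagate: assumes uf: "update_family U" and uS: "u \<in> S1" and X: "X \<in> U"
  and s: "s = 1 \<or> s = (-1::real)"
  and Xp: "\<forall>y\<in>X. ip y u < 0 \<or> (ip y u = 0 \<and> s * ip y (pw u) > 0)"
  shows "\<exists>Z. finite Z \<and> {x\<in>line u. s * ip x (pw u) \<le> 0} \<subseteq> closure_U U (halfplane u \<union> Z)"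
proof -
  define q where "q x = s * ip x (pw u)" for x
  define Q where "Q = q ` {y\<in>X. ip y u = 0}"
  have finX: "finite X" using uf X by (auto simp: update_family_def)
  have finQ: "finite Q" unfolding Q_def using finX by simp
  define L where "L = Max (insert 0 Q)"
  define \<delta> where "\<delta> = Min (insert 1 Q)"
  have QL: "\<forall>a\<in>Q. a \<le> L" "0 \<le> L" using finQ by (auto simp: L_def)
  have Qpos: "\<forall>a\<in>Q. a > 0" using Xp by (auto simp: Q_def q_def)
  have \<delta>Q: "\<forall>a\<in>Q. \<delta> \<le> a" using finQ by (auto simp: \<delta>_def)
  have \<delta>pos: "\<delta> > 0" using finQ Qpos by (simp add: \<delta>_def)
  define Z where "Z = {x\<in>line u. 0 < q x \<and> q x \<le> L}"
  have as: "\<bar>s\<bar> = 1" using s by auto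
  have "Z \<subseteq> {x. \<bar>ip x u\<bar> \<le> 0 \<and> \<bar>ip x (pw u)\<bar> \<le> L}"
  proof
    fix x assume x: "x \<in> Z"
    then have "\<bar>q x\<bar> \<le> L" by (auto simp: Z_def)
    then have "\<bar>ip x (pw u)\<bar> \<le> L" using as by (simp add: q_def abs_mult)
    then show "x \<in> {x. \<bar>ip x u\<bar> \<le> 0 \<and> \<bar>ip x (pw u)\<bar> \<le> L}" using x by (simp add: Z_def line_def)
  qed
  then have finZ: "finite Z" using box_finite[OF uS] finite_subset by blast
  define A where "A = closure_U U (halfplane u \<union> Z)"
  have ZA: "Z \<subseteq> A" and HA: "halfplane u \<subseteq> A" using cl_sub[of "halfplane u \<union> Z" U] by (auto simp: A_def)
  have clA: "closedU U A" unfolding A_def by (rule cl_closed[OF uf])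
  have qadd: "q (vadd x y) = q x + q y" for x y by (simp add: q_def algebra_simps)
  have claim: "\<forall>x\<in>line u. q x \<le> L \<and> L - real n * \<delta> < q x \<longrightarrow> x \<in> A" for n
  proof (induction n)
    case 0 then show ?case by auto
  next
    case (Suc n)
    show ?case
    proof (intro ballI impI)
      fix x assume x: "x \<in> line u" and b: "q x \<le> L \<and> L - real (Suc n) * \<delta> < q x"
      show "x \<in> A"
      proof (cases "q x > 0")
        case True then show ?thesis using ZA x b by (auto simp: Z_def)
      next
        case qneg: False
        have "vadd x ` X \<subseteq> A"
        proof
          fix z assume "z \<in> vadd x ` X"
          then obtain y where y: "y \<in> X" "z = vadd x y" by blast
          show "z \<in> A"
          proof (cases "ip y u < 0")
            case True
            then have "z \<in> halfplane u" using x y by (simp add: halfplane_def line_def)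
            then show ?thesis using HA by blast
          next
            case False
            then have y0: "ip y u = 0" "q y > 0" using Xp y by (auto simp: q_def)
            then have "q y \<in> Q" using y by (auto simp: Q_def)
            then have "q y \<le> L" "\<delta> \<le> q y" using QL \<delta>Q by auto
            then have "q z \<le> L" "L - real n * \<delta> < q z"
              using y(2) qadd[of x y] b qneg by (auto simp: algebra_simps)
            moreover have "z \<in> line u" using x y0 y(2) by (simp add: line_def)
            ultimately show ?thesis using Suc.IH by blast
          qed
        qed
        then show ?thesis using clA X unfolding closedU_def by blast
      qed
    qed
  qed
  have "{x\<in>line u. s * ip x (pw u) \<le> 0} \<subseteq> A"
  proof
    fix x assume x: "x \<in> {x\<in>line u. s * ip x (pw u) \<le> 0}"
    obtain n where n: "L - q x < real n * \<delta>" using reals_Archimedean3[OF \<delta>pos] by blast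
    have "q x \<le> L" using x QL by (simp add: q_def)
    then show "x \<in> A" using claim[of n] n x by auto
  qed
  then show ?thesis using finZ unfolding A_def by blast
qed


lemma alpha_plus_le: "infinite (closure_U U (halfplane u \<union> Z) \<inter> line_plus u) \<Longrightarrow> alpha_plus U u \<le> ecard Z"
  unfolding alpha_plus_def by (rule Inf_lower) blast

lemma alpha_minus_le: "infinite (closure_U U (halfplane u \<union> Z) \<inter> line_minus u) \<Longrightarrow> alpha_minus U u \<le> ecard Z"
  unfolding alpha_minus_def by (rule Inf_lower) blast

lemma ecard_fin: "finite Z \<Longrightarrow> ecard Z \<noteq> \<infinity>" by (simp add: ecard_def)

lemma le_fin: "(a::enat) \<le> b \<Longrightarrow> b \<noteq> \<infinity> \<Longrightarrow> a \<noteq> \<infinity>" using top.extremum_unique by fastforce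

lemma inf_sub: "infinite B \<Longrightarrow> B \<subseteq> A \<Longrightarrow> infinite (A \<inter> B)"
  by (metis finite_subset inf.absorb_iff2 inf.commute)

lemma alpha_fin_rat: assumes uf: "update_family U" and u: "u \<in> semicircle v0" and q: "u \<in> Q1"
  and st: "stable U u" and fin: "finite (semicircle v0 \<inter> stable_set U)"
  shows "alpha U u \<noteq> \<infinity>"
proof -
  have uS: "u \<in> S1" using u by (simp add: semicircle_def)
  obtain X where X: "X \<in> U" "\<forall>y\<in>X. ip y u < 0 \<or> (ip y u = 0 \<and> (-1) * ip y (pw u) > 0)"
    using rat_case[OF uf u st fin, of "-1"] by auto
  obtain Z where Z: "finite Z" "{x\<in>line u. (-1) * ip x (pw u) \<le> 0} \<subseteq> closure_U U (halfplane u \<union> Z)"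
    using propagate[OF uf uS X(1) _ X(2)] by auto
  have "line_plus u \<subseteq> closure_U U (halfplane u \<union> Z)" using Z(2) by (auto simp: line_plus_def)
  then have "infinite (closure_U U (halfplane u \<union> Z) \<inter> line_plus u)" by (rule inf_sub[OF inf_line_plus[OF q]])
  then have p: "alpha_plus U u \<noteq> \<infinity>" by (rule le_fin[OF alpha_plus_le ecard_fin[OF Z(1)]])
  obtain X' where X': "X' \<in> U" "\<forall>y\<in>X'. ip y u < 0 \<or> (ip y u = 0 \<and> 1 * ip y (pw u) > 0)"
    using rat_case[OF uf u st fin, of "1"] by auto
  obtain Z' where Z': "finite Z'" "{x\<in>line u. 1 * ip x (pw u) \<le> 0} \<subseteq> closure_U U (halfplane u \<union> Z')"
    using propagate[OF uf uS X'(1) _ X'(2)] by auto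
  have "line_minus u \<subseteq> closure_U U (halfplane u \<union> Z')" using Z'(2) unfolding line_minus_eq[OF uS] by auto
  then have "infinite (closure_U U (halfplane u \<union> Z') \<inter> line_minus u)" by (rule inf_sub[OF inf_line_minus[OF q]])
  then have m: "alpha_minus U u \<noteq> \<infinity>" by (rule le_fin[OF alpha_minus_le ecard_fin[OF Z'(1)]])
  show ?thesis using p m q by (simp add: alpha_def min_def)
qed

lemma alpha_unstable: assumes uf: "update_family U" and uS: "u \<in> S1" and ns: "\<not> stable U u"
  shows "alpha U u = 0"
proof (cases "u \<in> Q1")
  case True
  have L: "line u \<subseteq> closure_U U (halfplane u \<union> {})" using unstable_line[OF uf ns] by blast
  have "line_plus u \<subseteq> line u" "line_minus u \<subseteq> line u" by (auto simp: line_plus_def line_minus_def line_def ip_def)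
  then have "infinite (closure_U U (halfplane u \<union> {}) \<inter> line_plus u)"
     "infinite (closure_U U (halfplane u \<union> {}) \<inter> line_minus u)"
    using L inf_sub inf_line_plus[OF True] inf_line_minus[OF True] by blast+
  then have "alpha_plus U u \<le> 0" "alpha_minus U u \<le> 0"
    using alpha_plus_le alpha_minus_le by (metis ecard_def card.empty finite.emptyI zero_enat_def)+
  then show ?thesis using True by (simp add: alpha_def)
next
  case False then show ?thesis using ns by (simp add: alpha_def)
qed

lemma alpha_family_fin: assumes uf: "update_family U" and cr: "critical U"
  shows "alpha_family U \<noteq> \<infinity>"
proof -
  obtain v0 where v0: "v0 \<in> S1" "finite (semicircle v0 \<inter> stable_set U)" using cr by (auto simp: critical_def)
  define F where "F = semicircle v0 \<inter> stable_set U"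
  have finF: "finite F" using v0 by (simp add: F_def)
  define N where "N = Max (insert 0 (alpha U ` F))"
  have Fin: "\<forall>u\<in>F. alpha U u \<noteq> \<infinity>"
  proof
    fix u assume u: "u \<in> F"
    then have us: "u \<in> semicircle v0" "stable U u" by (auto simp: F_def stable_set_def)
    have "u \<in> Q1" using irr_case[OF uf us(1) _ us(2) v0(2)] by blast
    then show "alpha U u \<noteq> \<infinity>" using alpha_fin_rat[OF uf us(1) _ us(2) v0(2)] by blast
  qed
  have "N \<in> insert 0 (alpha U ` F)" unfolding N_def using finF by (intro Max_in) auto
  then have Nfin: "N \<noteq> \<infinity>" using Fin by (auto simp: zero_enat_def)
  have "alpha U u \<le> N" if u: "u \<in> semicircle v0" for u
  proof (cases "u \<in> F")
    case True then show ?thesis unfolding N_def using finF by (intro Max_ge) auto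
  next
    case False
    then have "\<not> stable U u" "u \<in> S1" using u by (auto simp: F_def stable_set_def semicircle_def)
    then show ?thesis using alpha_unstable[OF uf] by simp
  qed
  then have "(SUP u\<in>semicircle v0. alpha U u) \<le> N" by (rule SUP_least)
  moreover have "alpha_family U \<le> (SUP u\<in>semicircle v0. alpha U u)"
    unfolding alpha_family_def using v0(1) by (rule INF_lower)
  ultimately have "alpha_family U \<le> N" by (rule order_trans[rotated])
  then show ?thesis using Nfin by (rule le_fin)
qed




lemma vscale_add: "vadd (vscale a e) (vscale b e) = vscale (a + b) e"
  by (simp add: vadd_def vscale_def algebra_simps)

lemma vadd_vscale_cancel: "vadd (vscale a e) (vadd (vscale (-a) e) x) = x"
  by (simp add: vadd_def vscale_def)

lemma H_inv: assumes "e \<in> line u" shows "vadd (vscale k e) ` halfplane u = halfplane u"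
proof
  show "vadd (vscale k e) ` halfplane u \<subseteq> halfplane u" using assms by (auto simp: halfplane_def line_def)
  show "halfplane u \<subseteq> vadd (vscale k e) ` halfplane u"
  proof
    fix x assume x: "x \<in> halfplane u"
    have "vadd (vscale (-k) e) x \<in> halfplane u" using x assms by (simp add: halfplane_def line_def)
    moreover have "x = vadd (vscale k e) (vadd (vscale (-k) e) x)" by (simp add: vadd_vscale_cancel)
    ultimately show "x \<in> vadd (vscale k e) ` halfplane u" by blast
  qed
qed

lemma core_periodic:
  assumes uf: "update_family U" and uS: "u \<in> S1"
    and stab: "\<forall>X\<in>U. \<exists>y\<in>X. ip y u \<ge> 0" and finZ: "finite Z"
    and e: "e \<in> line u" and d: "ip e (pw u) \<noteq> 0"
    and unb: "\<forall>T. \<exists>x\<in>closure_U U (halfplane u \<union> Z) \<inter> line u. ip x (pw u) / ip e (pw u) > T"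
  shows "\<exists>a\<in>closure_U U (halfplane u \<union> Z) \<inter> line u. \<exists>k::nat. k \<ge> 1 \<and>
            (\<forall>j::nat. vadd a (vscale (int j * int k) e) \<in> closure_U U (halfplane u \<union> Z))"
proof -
  define A where "A = closure_U U (halfplane u \<union> Z)"
  define H where "H = halfplane u"
  define dd where "dd = ip e (pw u)"
  define \<sigma> where "\<sigma> x = ip x (pw u) / dd" for x
  have \<sigma>add: "\<sigma> (vadd x y) = \<sigma> x + \<sigma> y" for x y by (simp add: \<sigma>_def add_divide_distrib)
  have \<sigma>scale: "\<sigma> (vscale k x) = of_int k * \<sigma> x" for k x by (simp add: \<sigma>_def)
  have \<sigma>e: "\<sigma> e = 1" using d by (simp add: \<sigma>_def dd_def)
  have clA: "closedU U A" unfolding A_def by (rule cl_closed[OF uf])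
  have HA: "H \<subseteq> A" and ZA: "Z \<subseteq> A" using cl_sub[of "halfplane u \<union> Z" U] by (auto simp: A_def H_def)
  define M where "M = Max (insert 0 ((\<lambda>z. ip z u) ` Z))"
  have ZM: "\<forall>z\<in>Z. ip z u \<le> M" "0 \<le> M" using finZ by (auto simp: M_def)
  have AM: "\<forall>x\<in>A. ip x u \<le> M"
  proof -
    have "closedU U {x. ip x u \<le> M}" unfolding closedU_def
    proof (intro allI ballI impI)
      fix x X assume X: "X \<in> U" and sub: "vadd x ` X \<subseteq> {x. ip x u \<le> M}"
      obtain y where y: "y \<in> X" "ip y u \<ge> 0" using stab X by blast
      have "vadd x y \<in> {x. ip x u \<le> M}" using sub y(1) by blast
      then show "x \<in> {x. ip x u \<le> M}" using y(2) by simp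
    qed
    moreover have "halfplane u \<union> Z \<subseteq> {x. ip x u \<le> M}" using ZM by (auto simp: halfplane_def)
    ultimately have "A \<subseteq> {x. ip x u \<le> M}" unfolding A_def by (rule cl_least)
    then show ?thesis by blast
  qed
  have finU: "finite (\<Union>U)" using uf by (auto simp: update_family_def)
  define \<rho> where "\<rho> = Max (insert 0 ((\<lambda>y. \<bar>\<sigma> y\<bar>) ` \<Union>U))"
  have \<rho>1: "\<forall>X\<in>U. \<forall>y\<in>X. \<bar>\<sigma> y\<bar> \<le> \<rho>" unfolding \<rho>_def using finU by (intro ballI Max_ge) auto
  have \<rho>2: "0 \<le> \<rho>" unfolding \<rho>_def using finU by (intro Max_ge) auto
  note \<rho> = \<rho>1 \<rho>2
  define s0 where "s0 = Max (insert 0 (\<sigma> ` Z)) + 1"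
  have "\<forall>z\<in>Z. \<sigma> z \<le> Max (insert 0 (\<sigma> ` Z))" using finZ by (intro ballI Max_ge) auto
  then have s0: "\<forall>z\<in>Z. \<sigma> z < s0" unfolding s0_def by fastforce
  define W where "W s = A \<inter> {x. s - \<rho> \<le> \<sigma> x \<and> \<sigma> x < s \<and> 0 \<le> ip x u}" for s
  have det: "x \<in> closure_U U (H \<union> W s)" if s: "s0 \<le> s" and x: "x \<in> A" "s \<le> \<sigma> x" for s x
  proof -
    define D where "D = A \<inter> {x. \<sigma> x < s}"
    define F where "F = closure_U U (H \<union> W s) \<union> D"
    have sub1: "closure_U U (H \<union> W s) \<subseteq> A"
      using cl_in[OF uf, of "H \<union> W s" "halfplane u \<union> Z"] HA unfolding A_def W_def by blast
    have "closedU U F" unfolding closedU_def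
    proof (intro allI ballI impI)
      fix x X assume X: "X \<in> U" and sub: "vadd x ` X \<subseteq> F"
      have FA: "F \<subseteq> A" using sub1 by (auto simp: F_def D_def)
      show "x \<in> F"
      proof (cases "\<sigma> x < s")
        case True
        have "x \<in> A" using clA X sub FA unfolding closedU_def by blast
        then show ?thesis using True by (simp add: F_def D_def)
      next
        case False
        have "vadd x ` X \<subseteq> closure_U U (H \<union> W s)"
        proof
          fix z assume "z \<in> vadd x ` X"
          then obtain y where y: "y \<in> X" "z = vadd x y" by blast
          have zF: "z \<in> F" using sub y by blast
          have "\<sigma> z \<ge> s - \<rho>" using \<rho>(1) X y False \<sigma>add[of x y] by (smt (verit) abs_le_iff)
          show "z \<in> closure_U U (H \<union> W s)"
          proof (cases "z \<in> closure_U U (H \<union> W s)")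
            case True then show ?thesis .
          next
            case nF: False
            then have zD: "z \<in> A" "\<sigma> z < s" using zF by (auto simp: F_def D_def)
            show ?thesis
            proof (cases "ip z u < 0")
              case True then have "z \<in> H" by (simp add: H_def halfplane_def)
              then show ?thesis using cl_sub by blast
            next
              case False
              then have "z \<in> W s" using zD \<open>\<sigma> z \<ge> s - \<rho>\<close> by (simp add: W_def)
              then show ?thesis using cl_sub by blast
            qed
          qed
        qed
        then have "x \<in> closure_U U (H \<union> W s)" using cl_closed[OF uf] X unfolding closedU_def by blast
        then show ?thesis by (simp add: F_def)
      qed
    qed
    moreover have "halfplane u \<union> Z \<subseteq> F"
    proof -
      have "H \<subseteq> F" using cl_sub[of "H \<union> W s" U] by (auto simp: F_def)
      moreover have "Z \<subseteq> F" using ZA s0 s by (force simp: F_def D_def)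
      ultimately show ?thesis by (simp add: H_def)
    qed
    ultimately have "A \<subseteq> F" unfolding A_def by (rule cl_least)
    then show ?thesis using x by (auto simp: F_def D_def)
  qed
  \<comment> \<open>pigeonhole\<close>
  define f where "f n = vadd (vscale (- int n) e) ` W (s0 + real n)" for n :: nat
  define B where "B = {x. s0 - \<rho> \<le> \<sigma> x \<and> \<sigma> x < s0 \<and> 0 \<le> ip x u \<and> ip x u \<le> M}"
  have finB: "finite B"
  proof -
    have "B \<subseteq> {x. \<bar>ip x u\<bar> \<le> M \<and> \<bar>ip x (pw u)\<bar> \<le> (\<bar>s0 - \<rho>\<bar> + \<bar>s0\<bar>) * \<bar>dd\<bar>}"
    proof
      fix x assume x: "x \<in> B"
      have "\<bar>\<sigma> x\<bar> \<le> \<bar>s0 - \<rho>\<bar> + \<bar>s0\<bar>" using x by (auto simp: B_def)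
      moreover have "ip x (pw u) = \<sigma> x * dd" using d by (simp add: \<sigma>_def dd_def)
      ultimately have "\<bar>ip x (pw u)\<bar> \<le> (\<bar>s0 - \<rho>\<bar> + \<bar>s0\<bar>) * \<bar>dd\<bar>"
        by (simp add: abs_mult mult_right_mono)
      then show "x \<in> {x. \<bar>ip x u\<bar> \<le> M \<and> \<bar>ip x (pw u)\<bar> \<le> (\<bar>s0 - \<rho>\<bar> + \<bar>s0\<bar>) * \<bar>dd\<bar>}"
        using x by (auto simp: B_def)
    qed
    then show ?thesis using box_finite[OF uS] finite_subset by blast
  qed
  have fB: "f n \<subseteq> B" for n
  proof
    fix z assume "z \<in> f n"
    then obtain x where x: "x \<in> W (s0 + real n)" "z = vadd (vscale (- int n) e) x" by (auto simp: f_def)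
    have "\<sigma> z = \<sigma> x - real n" using x(2) \<sigma>add \<sigma>scale \<sigma>e by simp
    moreover have "ip z u = ip x u" using x(2) e by (simp add: line_def)
    ultimately show "z \<in> B" using x(1) AM by (auto simp: W_def B_def)
  qed
  have "\<not> inj f"
  proof
    assume "inj f"
    moreover have "finite (range f)" using fB finB by (meson Pow_iff finite_Pow_iff finite_subset image_subsetI)
    ultimately show False using finite_imageD infinite_UNIV_nat by blast
  qed
  then obtain n m where nm: "n < m" "f n = f m"
    by (metis inj_def linorder_neqE_nat)
  define k where "k = m - n"
  have k1: "k \<ge> 1" using nm by (simp add: k_def)
  define v where "v = vscale (int k) e"
  have Wm: "W (s0 + real m) = vadd v ` W (s0 + real n)"
  proof -
    have "W (s0 + real m) = vadd (vscale (int m) e) ` f m"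
      by (simp add: f_def image_image vadd_vscale_cancel)
    also have "\<dots> = vadd (vscale (int m) e) ` f n" using nm by simp
    also have "\<dots> = vadd v ` W (s0 + real n)"
      unfolding f_def vadd_image_comp vscale_add v_def k_def using nm by (simp add: of_nat_diff)
    finally show ?thesis .
  qed
  have shift: "vadd v x \<in> A" if x: "x \<in> A" "s0 + real n \<le> \<sigma> x" for x
  proof -
    have "x \<in> closure_U U (H \<union> W (s0 + real n))" using det[OF _ x] by simp
    then have "vadd v x \<in> vadd v ` closure_U U (H \<union> W (s0 + real n))" by blast
    also have "\<dots> = closure_U U (vadd v ` (H \<union> W (s0 + real n)))" using cl_translate[OF uf] by simp
    also have "\<dots> = closure_U U (H \<union> W (s0 + real m))"
      unfolding image_Un Wm v_def H_def H_inv[OF e] ..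
    also have "\<dots> \<subseteq> A" using cl_in[OF uf, of "H \<union> W (s0 + real m)" "halfplane u \<union> Z"] HA
      unfolding A_def W_def by blast
    finally show ?thesis .
  qed
  obtain a where a: "a \<in> A \<inter> line u" "\<sigma> a > s0 + real n" using unb[rule_format, of "s0 + real n"] unfolding A_def \<sigma>_def dd_def by blast
  have "vadd a (vscale (int j * int k) e) \<in> A \<and> \<sigma> (vadd a (vscale (int j * int k) e)) \<ge> s0 + real n" for j :: nat
  proof (induction j)
    case 0 then show ?case using a by (simp add: vscale_def vadd_def)
  next
    case (Suc j)
    let ?x = "vadd a (vscale (int j * int k) e)"
    have "vadd v ?x \<in> A" using shift Suc by blast
    moreover have "vadd v ?x = vadd a (vscale (int (Suc j) * int k) e)"
      by (simp add: v_def vadd_def vscale_def algebra_simps)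
    moreover have "\<sigma> (vadd a (vscale (int (Suc j) * int k) e)) \<ge> s0 + real n"
    proof -
      have "\<sigma> (vadd a (vscale (int (Suc j) * int k) e)) = \<sigma> a + real j * real k + real k"
        using \<sigma>add \<sigma>scale \<sigma>e by (simp add: algebra_simps)
      moreover have "\<sigma> (vadd a (vscale (int j * int k) e)) = \<sigma> a + real j * real k"
        using \<sigma>add \<sigma>scale \<sigma>e by simp
      ultimately show ?thesis using Suc by simp
    qed
    ultimately show ?case by simp
  qed
  then show ?thesis using a k1 unfolding A_def by blast
qed




lemma vscale_vscale: "vscale a (vscale b x) = vscale (a * b) x"
  by (simp add: vscale_def algebra_simps)

lemma finish_sp:
  assumes uS: "u \<in> S1" and e: "e \<in> line u" and pe: "ip e (pw u) \<noteq> 0"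
    and a: "a \<in> Y \<inter> line u" and k: "k \<ge> (1::nat)"
    and per: "\<forall>j::nat. vadd a (vscale (int j * int k) e) \<in> Y"
  shows "\<exists>K::int. K \<ge> 1 \<and> (vadd a \<circ> vscale K) ` (if ip e (pw u) > 0 then line_plus u else line_minus u) \<subseteq> Y \<inter> line u"
proof -
  define N where "N = (if fst e \<noteq> 0 then fst e else snd e)"
  have e0: "e \<noteq> (0,0)" using pe by (auto simp: ip_def)
  then have N0: "N \<noteq> 0" by (auto simp: N_def prod_eq_iff)
  define K where "K = int k * \<bar>N\<bar>"
  have n1: "\<bar>N\<bar> \<ge> 1" using N0 by linarith
  have k1: "int k \<ge> 1" using k by simp
  have K1: "K \<ge> 1" unfolding K_def using mult_mono[OF k1 n1] by simp
  show ?thesis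
  proof (intro exI[of _ K] conjI K1 subsetI)
    fix z assume "z \<in> (vadd a \<circ> vscale K) ` (if ip e (pw u) > 0 then line_plus u else line_minus u)"
    then obtain x where x: "x \<in> (if ip e (pw u) > 0 then line_plus u else line_minus u)" "z = vadd a (vscale K x)" by auto
    have xl: "x \<in> line u" using x(1) by (auto simp: line_plus_def line_minus_def line_def ip_def split: if_splits)
    define c where "c = (if fst e \<noteq> 0 then fst x else snd x)"
    have m: "vscale N x = vscale c e" unfolding N_def c_def by (rule line_multiple[OF uS e xl e0])
    define c' where "c' = sgn N * c"
    have absN: "\<bar>N\<bar> = sgn N * N" by (simp add: abs_sgn)
    have Kx: "vscale K x = vscale (int k * c') e"
    proof -
      have "vscale K x = vscale (int k * sgn N) (vscale N x)" unfolding K_def absN vscale_vscale by (simp add: algebra_simps)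
      also have "\<dots> = vscale (int k * c') e" unfolding m vscale_vscale c'_def by (simp add: algebra_simps)
      finally show ?thesis .
    qed
    have pK: "of_int K * ip x (pw u) = of_int (int k * c') * ip e (pw u)"
      using arg_cong[OF Kx, of "\<lambda>v. ip v (pw u)"] by simp
    have Kpos: "(0::real) < of_int K" using K1 by simp
    have kpos: "(0::real) < real k" using k by simp
    have "c' \<ge> 0"
    proof (cases "ip e (pw u) > 0")
      case True
      then have "ip x (pw u) \<ge> 0" using x(1) by (simp add: line_plus_def)
      then have "of_int (int k * c') * ip e (pw u) \<ge> 0" using pK Kpos by (metis mult_nonneg_nonneg less_imp_le)
      then show ?thesis using True kpos by (simp add: zero_le_mult_iff)
    next
      case False
      then have neg: "ip e (pw u) < 0" using pe by simp
      have "x \<in> line_minus u" using x(1) False by simp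
      then have "ip x (pw u) \<le> 0" using line_minus_eq[OF uS] by auto
      then have "of_int (int k * c') * ip e (pw u) \<le> 0" using pK Kpos by (metis mult_nonneg_nonpos less_imp_le)
      then show ?thesis using neg kpos by (simp add: mult_le_0_iff zero_le_mult_iff)
    qed
    then have "vscale K x = vscale (int (nat c') * int k) e" using Kx by (simp add: mult.commute)
    then have "z = vadd a (vscale (int (nat c') * int k) e)" using x(2) by simp
    then have "z \<in> Y" using per[rule_format, of "nat c'"] \<open>c' \<ge> 0\<close> by simp
    moreover have "z \<in> line u" using x(2) a xl by (simp add: line_vadd line_vscale)
    ultimately show "z \<in> Y \<inter> line u" by simp
  qed
qed


theorem mainTheorem5:
  fixes U :: "site set set" and u :: dir and Z :: "site set"
  assumes "update_family U"
    and "critical U"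
    and "u \<in> Q1"
    and "alpha U u \<le> alpha_family U"
    and "voracious U u Z"
  shows "semi_periodic u (closure_U U (halfplane u \<union> Z) \<inter> line u)"
proof -
  note uf = assms(1)
  have uS: "u \<in> S1" using assms(3) by (simp add: Q1_def)
  define A where "A = closure_U U (halfplane u \<union> Z)"
  have Yl: "A \<inter> line u \<subseteq> line u" by blast
  show ?thesis
  proof (cases "stable U u")
    case False
    have "line u \<subseteq> A" unfolding A_def by (rule unstable_line[OF uf False])
    moreover have "(vadd (0,0) \<circ> vscale 1) ` line_plus u \<subseteq> line u"
      by (auto simp: line_plus_def vscale_def)
    ultimately show ?thesis unfolding semi_periodic_def A_def[symmetric]
      by (intro conjI Yl bexI[of _ "(0,0)"] exI[of _ 1]) (auto simp: line_def ip_def)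
  next
    case True
    have stab: "\<forall>X\<in>U. \<exists>y\<in>X. ip y u \<ge> 0" using True stable_iff[OF uf] by blast
    have ec: "ecard Z \<le> alpha U u" and infA: "infinite (A \<inter> line u)"
      using assms(5) by (auto simp: voracious_def A_def)
    have "ecard Z \<noteq> \<infinity>"
      using le_fin[OF order_trans[OF ec assms(4)] alpha_family_fin[OF uf assms(2)]] .
    then have finZ: "finite Z" by (auto simp: ecard_def split: if_splits)
    obtain e0 where e0: "e0 \<in> line u" "ip e0 (pw u) > 0" using line_dir[OF assms(3)] by blast
    have unbd: "\<exists>x\<in>A \<inter> line u. \<bar>ip x (pw u)\<bar> > T" for T
    proof (rule ccontr)
      assume "\<not> ?thesis"
      then have "A \<inter> line u \<subseteq> {x. \<bar>ip x u\<bar> \<le> 0 \<and> \<bar>ip x (pw u)\<bar> \<le> T}"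
        by (auto simp: line_def not_less)
      then show False using infA box_finite[OF uS] finite_subset by blast
    qed
    obtain e where e: "e \<in> line u" "ip e (pw u) \<noteq> 0"
      and unb: "\<forall>T. \<exists>x\<in>A \<inter> line u. ip x (pw u) / ip e (pw u) > T"
    proof (cases "\<forall>T. \<exists>x\<in>A \<inter> line u. ip x (pw u) > T")
      case True
      have "\<forall>T. \<exists>x\<in>A \<inter> line u. ip x (pw u) / ip e0 (pw u) > T"
      proof
        fix T
        obtain x where x: "x \<in> A \<inter> line u" "ip x (pw u) > T * ip e0 (pw u)" using True by blast
        then have "ip x (pw u) / ip e0 (pw u) > T" using e0(2) by (simp add: pos_less_divide_eq)
        then show "\<exists>x\<in>A \<inter> line u. ip x (pw u) / ip e0 (pw u) > T" using x(1) by blast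
      qed
      then show ?thesis using that e0 by auto
    next
      case False
      then obtain T0 where T0: "\<forall>x\<in>A \<inter> line u. ip x (pw u) \<le> T0" by (auto simp: not_less)
      let ?e = "vscale (-1) e0"
      have pe: "ip ?e (pw u) = - ip e0 (pw u)" by simp
      have "\<forall>T. \<exists>x\<in>A \<inter> line u. ip x (pw u) / ip ?e (pw u) > T"
      proof
        fix T
        obtain x where x: "x \<in> A \<inter> line u" "\<bar>ip x (pw u)\<bar> > max \<bar>T0\<bar> (\<bar>T\<bar> * ip e0 (pw u))"
          using unbd by blast
        have "ip x (pw u) \<le> T0" using T0 x(1) by blast
        then have "ip x (pw u) < - (\<bar>T\<bar> * ip e0 (pw u))" using x(2) by linarith
        moreover have "- (\<bar>T\<bar> * ip e0 (pw u)) \<le> T * ip ?e (pw u)"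
          using e0(2) pe by (simp add: mult_right_mono)
        ultimately have "ip x (pw u) < T * ip ?e (pw u)" by linarith
        then have "T * ip e0 (pw u) < - ip x (pw u)" using pe by simp
        then have "T < (- ip x (pw u)) / ip e0 (pw u)" using e0(2) by (subst pos_less_divide_eq) auto
        then have "ip x (pw u) / ip ?e (pw u) > T" using pe by simp
        then show "\<exists>x\<in>A \<inter> line u. ip x (pw u) / ip ?e (pw u) > T" using x(1) by blast
      qed
      then show ?thesis using that[of ?e] e0 line_vscale[OF e0(1)] by auto
    qed
    obtain a k where a: "a \<in> A \<inter> line u" and k: "k \<ge> (1::nat)"
      and per: "\<forall>j::nat. vadd a (vscale (int j * int k) e) \<in> A"
      using core_periodic[OF uf uS stab finZ e(1) e(2)] unb unfolding A_def by blast
    obtain K where K: "K \<ge> 1" "(vadd a \<circ> vscale K) ` (if ip e (pw u) > 0 then line_plus u else line_minus u) \<subseteq> A \<inter> line u"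
      using finish_sp[OF uS e(1) e(2) a k per] by blast
    have "a \<in> line u" using a by blast
    then show ?thesis unfolding semi_periodic_def A_def[symmetric]
      using K by (intro conjI Yl bexI[of _ a] exI[of _ K]) (auto split: if_splits)
  qed
qed


end
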